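(* Let $L$ be a pomset language. The following are equivalent: (1) $L$ is series-rational, i.e. $L=[\![e]\!]$ for some series-rational expression $e$; (2) $L=L_A(q)$ for some state $q$ of some finite and fork-acyclic pomset automaton $A$.
   Context: Fix a finite alphabet $\Sigma$. Pomsets are isomorphism classes of finite labelled posets over $\Sigma$; a pomset language is a set of pomsets. $1$ is the empty pomset; sequential composition $U\cdot V$ is the disjoint union with all elements of $U$ below all elements of $V$; parallel composition $U\parallel V$ is the disjoint union of orders. $\mathsf{SP}(\Sigma)$ is the smallest set containing $1$ and the one-element pomsets $a\in\Sigma$ closed under $\cdot,\parallel$; these lift pointwise to languages, and $L^*=\bigcup_n L^n$ with $L^0=\{1\}$, $L^{n+1}=L\cdot L^n$. Series-rational expressions: $e,f::=0\mid 1\mid a\in\Sigma\mid e+f\mid e\cdot f\mid e\parallel f\mid e^*$ with $[\![0]\!]=\emptyset$, $[\![1]\!]=\{1\}$, $[\![a]\!]=\{a\}$, $[\![e+f]\!]=[\![e]\!]\cup[\![f]\!]$, $[\![e\cdot f]\!]=[\![e]\!]\cdot[\![f]\!]$, $[\![e\parallel f]\!]=[\![e]\!]\parallel[\![f]\!]$, $[\![e^*]\!]=[\![e]\!]^*$. A pomset automaton is $A=\langle Q,F,\delta,\gamma\rangle$ with $F\subseteq Q$, $\delta:Q\times\Sigma\to2^Q$, $\gamma:Q\times\mathbb{M}(Q)\to2^Q$ ($\mathbb{M}(Q)$ finite multisets over $Q$), each $q$ having finitely many $\phi$ with $\gamma(q,\phi)\ne\emptyset$; finite if $Q$ is finite.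 The run relation $\to_A$ is the smallest relation with: $q\xrightarrow{1}_A q$; $q\xrightarrow{a}_A q'$ if $q'\in\delta(q,a)$; $q\xrightarrow{U\cdot V}_A q'$ if $q\xrightarrow{U}_A q''\xrightarrow{V}_A q'$; $q\xrightarrow{U_1\parallel\cdots\parallel U_n}_A q'$ if $q'\in\gamma(q,\{\!|q_1,\dots,q_n|\!\})$ and each $q_i\xrightarrow{U_i}_A q_i'$ for some $q_i'\in F$. $L_A(q)=\{U\in\mathsf{SP}(\Sigma)\mid\exists q'\in F.\ q\xrightarrow{U}_A q'\}$. The support relation $\preceq_A$ is the smallest preorder with $q'\preceq_A q$ whenever $q'\in\delta(q,a)$, or $q'\in\gamma(q,\phi)$, or $q'\in\phi$ with $\gamma(q,\phi)\ne\emptyset$; $A$ is fork-acyclic if $r\in\phi$ and $\gamma(q,\phi)\ne\emptyset$ imply $q\not\preceq_A r$. *)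

theory Defs
  imports Main "HOL-Library.Multiset"
begin

record 'a lposet =
  car :: "nat set"
  rel :: "(nat \<times> nat) set"
  lab :: "nat \<Rightarrow> 'a"

definition wf_lp :: "'a lposet \<Rightarrow> bool" where
  "wf_lp x \<longleftrightarrow> finite (car x) \<and> rel x \<subseteq> car x \<times> car x \<and>
     refl_on (car x) (rel x) \<and> antisym (rel x) \<and> trans (rel x)"

definition lp_iso :: "'a lposet \<Rightarrow> 'a lposet \<Rightarrow> bool" where
  "lp_iso x y \<longleftrightarrow> (\<exists>f. bij_betw f (car x) (car y) \<and>
     (\<forall>u\<in>car x. \<forall>v\<in>car x. (u, v) \<in> rel x \<longleftrightarrow> (f u, f v) \<in> rel y) \<and>
     (\<forall>u\<in>car x. lab y (f u) = lab x u))"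

definition empty_lp :: "'a lposet" where
  "empty_lp = \<lparr>car = {}, rel = {}, lab = (\<lambda>_. undefined)\<rparr>"

lemma wf_empty_lp: "wf_lp empty_lp"
  by (simp add: wf_lp_def empty_lp_def refl_on_def antisym_def trans_def)

typedef 'a pomset = "{C :: 'a lposet set. \<exists>x. wf_lp x \<and> C = {y. wf_lp y \<and> lp_iso x y}}"
  using wf_empty_lp by blast

definition pom :: "'a lposet \<Rightarrow> 'a pomset" where
  "pom x = Abs_pomset {y. wf_lp y \<and> lp_iso x y}"

definition rep :: "'a pomset \<Rightarrow> 'a lposet" where
  "rep U = (SOME x. x \<in> Rep_pomset U)"

definition par_lp :: "'a lposet \<Rightarrow> 'a lposet \<Rightarrow> 'a lposet" where
  "par_lp x y = \<lparr>car = (\<lambda>n. 2*n) ` car x \<union> (\<lambda>n. 2*n+1) ` car y,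
     rel = {(2*u, 2*v) | u v. (u, v) \<in> rel x} \<union> {(2*u+1, 2*v+1) | u v. (u, v) \<in> rel y},
     lab = (\<lambda>n. if even n then lab x (n div 2) else lab y (n div 2))\<rparr>"

definition seq_lp :: "'a lposet \<Rightarrow> 'a lposet \<Rightarrow> 'a lposet" where
  "seq_lp x y = \<lparr>car = (\<lambda>n. 2*n) ` car x \<union> (\<lambda>n. 2*n+1) ` car y,
     rel = {(2*u, 2*v) | u v. (u, v) \<in> rel x} \<union> {(2*u+1, 2*v+1) | u v. (u, v) \<in> rel y}
           \<union> {(2*u, 2*v+1) | u v. u \<in> car x \<and> v \<in> car y},
     lab = (\<lambda>n. if even n then lab x (n div 2) else lab y (n div 2))\<rparr>"

definition pom_one :: "'a pomset" where
  "pom_one = pom empty_lp"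

definition pom_sym :: "'a \<Rightarrow> 'a pomset" where
  "pom_sym a = pom \<lparr>car = {0}, rel = {(0, 0)}, lab = (\<lambda>_. a)\<rparr>"

definition pom_seq :: "'a pomset \<Rightarrow> 'a pomset \<Rightarrow> 'a pomset" where
  "pom_seq U V = pom (seq_lp (rep U) (rep V))"

definition pom_par :: "'a pomset \<Rightarrow> 'a pomset \<Rightarrow> 'a pomset" where
  "pom_par U V = pom (par_lp (rep U) (rep V))"

inductive_set sp :: "'a pomset set" where
  sp_one: "pom_one \<in> sp"
| sp_sym: "pom_sym a \<in> sp"
| sp_seq: "U \<in> sp \<Longrightarrow> V \<in> sp \<Longrightarrow> pom_seq U V \<in> sp"
| sp_par: "U \<in> sp \<Longrightarrow> V \<in> sp \<Longrightarrow> pom_par U V \<in> sp"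

definition lseq :: "'a pomset set \<Rightarrow> 'a pomset set \<Rightarrow> 'a pomset set" where
  "lseq L M = {pom_seq U V | U V. U \<in> L \<and> V \<in> M}"

definition lpar :: "'a pomset set \<Rightarrow> 'a pomset set \<Rightarrow> 'a pomset set" where
  "lpar L M = {pom_par U V | U V. U \<in> L \<and> V \<in> M}"

fun lpow :: "'a pomset set \<Rightarrow> nat \<Rightarrow> 'a pomset set" where
  "lpow L 0 = {pom_one}"
| "lpow L (Suc n) = lseq L (lpow L n)"

definition lstar :: "'a pomset set \<Rightarrow> 'a pomset set" where
  "lstar L = (\<Union>n. lpow L n)"

datatype 'a srexp = Zero | One | Sym 'a | Plus "'a srexp" "'a srexp"
  | Seq "'a srexp" "'a srexp" | Par "'a srexp" "'a srexp" | Star "'a srexp"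

fun sem :: "'a srexp \<Rightarrow> 'a pomset set" where
  "sem Zero = {}"
| "sem One = {pom_one}"
| "sem (Sym a) = {pom_sym a}"
| "sem (Plus e f) = sem e \<union> sem f"
| "sem (Seq e f) = lseq (sem e) (sem f)"
| "sem (Par e f) = lpar (sem e) (sem f)"
| "sem (Star e) = lstar (sem e)"

record 'a pa =
  states :: "nat set"
  final :: "nat set"
  delta :: "nat \<Rightarrow> 'a \<Rightarrow> nat set"
  gamma :: "nat \<Rightarrow> nat multiset \<Rightarrow> nat set"

definition pa_wf :: "'a pa \<Rightarrow> bool" where
  "pa_wf A \<longleftrightarrow> final A \<subseteq> states A \<and>
     (\<forall>q a. delta A q a \<subseteq> states A) \<and>
     (\<forall>q a. q \<notin> states A \<longrightarrow> delta A q a = {}) \<and>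
     (\<forall>q \<phi>. gamma A q \<phi> \<subseteq> states A) \<and>
     (\<forall>q \<phi>. gamma A q \<phi> \<noteq> {} \<longrightarrow> q \<in> states A \<and> set_mset \<phi> \<subseteq> states A) \<and>
     (\<forall>q. finite {\<phi>. gamma A q \<phi> \<noteq> {}})"

definition pom_par_list :: "'a pomset list \<Rightarrow> 'a pomset" where
  "pom_par_list Us = foldr pom_par Us pom_one"

inductive run :: "'a pa \<Rightarrow> nat \<Rightarrow> 'a pomset \<Rightarrow> nat \<Rightarrow> bool" for A where
  run_one: "q \<in> states A \<Longrightarrow> run A q pom_one q"
| run_sym: "q' \<in> delta A q a \<Longrightarrow> run A q (pom_sym a) q'"
| run_seq: "run A q U q'' \<Longrightarrow> run A q'' V q' \<Longrightarrow> run A q (pom_seq U V) q'"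
| run_par: "q' \<in> gamma A q (mset qs) \<Longrightarrow> length Us = length qs \<Longrightarrow>
    (\<forall>i<length qs. \<exists>f\<in>final A. run A (qs ! i) (Us ! i) f) \<Longrightarrow>
    run A q (pom_par_list Us) q'"

definition lang_pa :: "'a pa \<Rightarrow> nat \<Rightarrow> 'a pomset set" where
  "lang_pa A q = {U \<in> sp. \<exists>q'\<in>final A. run A q U q'}"

text \<open>Support relation: (q', q) in supp A means q' precedes-or-equals q.\<close>

definition supp_step :: "'a pa \<Rightarrow> (nat \<times> nat) set" where
  "supp_step A = {(q', q). (\<exists>a. q' \<in> delta A q a) \<or> (\<exists>\<phi>. q' \<in> gamma A q \<phi>) \<or>
                           (\<exists>\<phi>. q' \<in># \<phi> \<and> gamma A q \<phi> \<noteq> {})}"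

definition supp :: "'a pa \<Rightarrow> (nat \<times> nat) set" where
  "supp A = (supp_step A)\<^sup>*"

definition fork_acyclic :: "'a pa \<Rightarrow> bool" where
  "fork_acyclic A \<longleftrightarrow> (\<forall>q \<phi> r. r \<in># \<phi> \<and> gamma A q \<phi> \<noteq> {} \<longrightarrow> (q, r) \<notin> supp A)"

end

theory Submission
  imports Defs "HOL-Library.Countable"
begin

lemma iso_refl: "lp_iso x x"
  unfolding lp_iso_def by (rule exI[of _ id]) auto

lemma iso_sym: assumes "lp_iso x y" shows "lp_iso y x"
proof -
  obtain f where b: "bij_betw f (car x) (car y)" and r: "\<forall>u\<in>car x. \<forall>v\<in>car x. (u, v) \<in> rel x \<longleftrightarrow> (f u, f v) \<in> rel y"
    and l: "\<forall>u\<in>car x. lab y (f u) = lab x u" using assms unfolding lp_iso_def by blast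
  let ?g = "inv_into (car x) f"
  have b2: "bij_betw ?g (car y) (car x)" using b by (rule bij_betw_inv_into)
  have fg: "\<And>v. v \<in> car y \<Longrightarrow> f (?g v) = v" using b by (meson bij_betw_inv_into_right)
  have gx: "\<And>v. v \<in> car y \<Longrightarrow> ?g v \<in> car x" using b2 bij_betwE by blast
  show ?thesis unfolding lp_iso_def
    apply (rule exI[of _ ?g])
    using b2 r l fg gx by metis
qed

lemma iso_trans: assumes "lp_iso x y" "lp_iso y z" shows "lp_iso x z"
proof -
  obtain f where b: "bij_betw f (car x) (car y)" and r: "\<forall>u\<in>car x. \<forall>v\<in>car x. (u, v) \<in> rel x \<longleftrightarrow> (f u, f v) \<in> rel y"
    and l: "\<forall>u\<in>car x. lab y (f u) = lab x u" using assms unfolding lp_iso_def by blast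
  obtain g where b': "bij_betw g (car y) (car z)" and r': "\<forall>u\<in>car y. \<forall>v\<in>car y. (u, v) \<in> rel y \<longleftrightarrow> (g u, g v) \<in> rel z"
    and l': "\<forall>u\<in>car y. lab z (g u) = lab y u" using assms unfolding lp_iso_def by blast
  have fx: "\<And>u. u \<in> car x \<Longrightarrow> f u \<in> car y" using b bij_betwE by blast
  show ?thesis unfolding lp_iso_def
    apply (rule exI[of _ "g \<circ> f"])
    using bij_betw_trans[OF b b'] r r' l l' fx by auto
qed

lemma iso_witness:
  assumes "\<And>u. u\<in>car x \<Longrightarrow> f u \<in> car y" "\<And>v. v\<in>car y \<Longrightarrow> g v \<in> car x"
    "\<And>u. u\<in>car x \<Longrightarrow> g (f u) = u" "\<And>v. v\<in>car y \<Longrightarrow> f (g v) = v"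
    "\<And>u v. u\<in>car x \<Longrightarrow> v\<in>car x \<Longrightarrow> (u,v)\<in>rel x \<longleftrightarrow> (f u, f v) \<in> rel y"
    "\<And>u. u\<in>car x \<Longrightarrow> lab y (f u) = lab x u"
  shows "lp_iso x y"
  unfolding lp_iso_def
  apply (rule exI[of _ f])
  using assms by (auto intro!: bij_betw_byWitness[where f'=g])

lemma pom_eq: "lp_iso x y \<Longrightarrow> pom x = pom y"
  unfolding pom_def using iso_sym iso_trans by metis

lemma Rep_pom: "wf_lp x \<Longrightarrow> Rep_pomset (pom x) = {y. wf_lp y \<and> lp_iso x y}"
  unfolding pom_def by (rule Abs_pomset_inverse) blast

lemma rep_in: "rep U \<in> Rep_pomset U"
proof -
  obtain x where "wf_lp x" "Rep_pomset U = {y. wf_lp y \<and> lp_iso x y}"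
    using Rep_pomset by blast
  then have "x \<in> Rep_pomset U" using iso_refl by blast
  then show ?thesis unfolding rep_def by (rule someI)
qed

lemma rep_wf: "wf_lp (rep U)"
  using rep_in Rep_pomset by blast

lemma pom_rep: "pom (rep U) = U"
proof -
  obtain x where x: "wf_lp x" "Rep_pomset U = {y. wf_lp y \<and> lp_iso x y}"
    using Rep_pomset by blast
  then have i: "lp_iso x (rep U)" using rep_in by blast
  have "pom (rep U) = pom x" using pom_eq iso_sym[OF i] by metis
  also have "pom x = Abs_pomset (Rep_pomset U)" unfolding pom_def x(2) ..
  finally show ?thesis by (simp add: Rep_pomset_inverse)
qed

lemma rep_pom: "wf_lp x \<Longrightarrow> lp_iso x (rep (pom x))"
  using rep_in[of "pom x"] Rep_pom by blast

lemma two_neq[simp]: "Suc (2*a) \<noteq> 2*(b::nat)" "2*b \<noteq> Suc (2*(a::nat))"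
  by presburger+

lemma car_seq: "n \<in> car (seq_lp x y) \<longleftrightarrow> (even n \<and> n div 2 \<in> car x) \<or> (odd n \<and> n div 2 \<in> car y)"
  unfolding seq_lp_def by (auto elim!: evenE oddE)

lemma car_par: "n \<in> car (par_lp x y) \<longleftrightarrow> (even n \<and> n div 2 \<in> car x) \<or> (odd n \<and> n div 2 \<in> car y)"
  unfolding par_lp_def by (auto elim!: evenE oddE)

lemma rel_seq: "(m, n) \<in> rel (seq_lp x y) \<longleftrightarrow> (even m \<and> even n \<and> (m div 2, n div 2) \<in> rel x) \<or>
   (odd m \<and> odd n \<and> (m div 2, n div 2) \<in> rel y) \<or> (even m \<and> odd n \<and> m div 2 \<in> car x \<and> n div 2 \<in> car y)"
  unfolding seq_lp_def by (auto elim!: evenE oddE)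

lemma rel_par: "(m, n) \<in> rel (par_lp x y) \<longleftrightarrow> (even m \<and> even n \<and> (m div 2, n div 2) \<in> rel x) \<or>
   (odd m \<and> odd n \<and> (m div 2, n div 2) \<in> rel y)"
  unfolding par_lp_def by (auto elim!: evenE oddE)

lemma lab_seq: "lab (seq_lp x y) n = (if even n then lab x (n div 2) else lab y (n div 2))"
  unfolding seq_lp_def by simp

lemma lab_par: "lab (par_lp x y) n = (if even n then lab x (n div 2) else lab y (n div 2))"
  unfolding par_lp_def by simp

lemmas lp_simps = car_seq car_par rel_seq rel_par lab_seq lab_par


lemma iso_witnessE:
  assumes "lp_iso x y"
  obtains f g where "\<And>u. u\<in>car x \<Longrightarrow> f u \<in> car y" "\<And>v. v\<in>car y \<Longrightarrow> g v \<in> car x"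
    "\<And>u. u\<in>car x \<Longrightarrow> g (f u) = u" "\<And>v. v\<in>car y \<Longrightarrow> f (g v) = v"
    "\<And>u v. u\<in>car x \<Longrightarrow> v\<in>car x \<Longrightarrow> (u,v)\<in>rel x \<longleftrightarrow> (f u, f v) \<in> rel y"
    "\<And>u. u\<in>car x \<Longrightarrow> lab y (f u) = lab x u"
proof -
  obtain f where b: "bij_betw f (car x) (car y)" and r: "\<forall>u\<in>car x. \<forall>v\<in>car x. (u, v) \<in> rel x \<longleftrightarrow> (f u, f v) \<in> rel y"
    and l: "\<forall>u\<in>car x. lab y (f u) = lab x u" using assms unfolding lp_iso_def by blast
  let ?g = "inv_into (car x) f"
  have b2: "bij_betw ?g (car y) (car x)" using b by (rule bij_betw_inv_into)
  have fg: "\<And>v. v \<in> car y \<Longrightarrow> f (?g v) = v" using b by (meson bij_betw_inv_into_right)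
  have gf: "\<And>v. v \<in> car x \<Longrightarrow> ?g (f v) = v" using b by (meson bij_betw_inv_into_left)
  have gx: "\<And>v. v \<in> car y \<Longrightarrow> ?g v \<in> car x" using b2 bij_betwE by blast
  have fx: "\<And>v. v \<in> car x \<Longrightarrow> f v \<in> car y" using b bij_betwE by blast
  show ?thesis using that[of f ?g] fx gx gf fg r l by blast
qed

lemma wf_seq: assumes "wf_lp x" "wf_lp y" shows "wf_lp (seq_lp x y)"
proof -
  have "finite (car (seq_lp x y))" using assms unfolding wf_lp_def seq_lp_def by simp
  moreover have "rel (seq_lp x y) \<subseteq> car (seq_lp x y) \<times> car (seq_lp x y)"
    using assms unfolding wf_lp_def by (auto simp: lp_simps)
  moreover have "refl_on (car (seq_lp x y)) (rel (seq_lp x y))"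
    using assms unfolding wf_lp_def refl_on_def by (auto simp: lp_simps)
  moreover have "antisym (rel (seq_lp x y))"
    using assms unfolding wf_lp_def antisym_def
    by (auto simp: lp_simps) (metis dvd_mult_div_cancel odd_two_times_div_two_succ)+
  moreover have "trans (rel (seq_lp x y))"
    using assms unfolding wf_lp_def trans_def
    by (auto simp: lp_simps; blast)
  ultimately show ?thesis unfolding wf_lp_def by blast
qed

lemma wf_par: assumes "wf_lp x" "wf_lp y" shows "wf_lp (par_lp x y)"
proof -
  have "finite (car (par_lp x y))" using assms unfolding wf_lp_def par_lp_def by simp
  moreover have "rel (par_lp x y) \<subseteq> car (par_lp x y) \<times> car (par_lp x y)"
    using assms unfolding wf_lp_def by (auto simp: lp_simps)
  moreover have "refl_on (car (par_lp x y)) (rel (par_lp x y))"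
    using assms unfolding wf_lp_def refl_on_def by (auto simp: lp_simps)
  moreover have "antisym (rel (par_lp x y))"
    using assms unfolding wf_lp_def antisym_def
    by (auto simp: lp_simps) (metis dvd_mult_div_cancel odd_two_times_div_two_succ)+
  moreover have "trans (rel (par_lp x y))"
    using assms unfolding wf_lp_def trans_def
    by (auto simp: lp_simps; blast)
  ultimately show ?thesis unfolding wf_lp_def by blast
qed

lemma wf_empty: "wf_lp (empty_lp)" by (rule wf_empty_lp)


lemma car_seqE: assumes "u \<in> car (seq_lp x y)"
  obtains k where "u = 2*k" "k \<in> car x" | k where "u = 2*k+1" "k \<in> car y"
  using assms unfolding seq_lp_def by auto
lemma car_parE: assumes "u \<in> car (par_lp x y)"
  obtains k where "u = 2*k" "k \<in> car x" | k where "u = 2*k+1" "k \<in> car y"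
  using assms unfolding par_lp_def by auto

lemma seq_cong: assumes "lp_iso x x'" "lp_iso y y'" shows "lp_iso (seq_lp x y) (seq_lp x' y')"
proof -
  obtain f f' where f: "\<And>u. u\<in>car x \<Longrightarrow> f u \<in> car x'" "\<And>v. v\<in>car x' \<Longrightarrow> f' v \<in> car x"
    "\<And>u. u\<in>car x \<Longrightarrow> f' (f u) = u" "\<And>v. v\<in>car x' \<Longrightarrow> f (f' v) = v"
    "\<And>u v. u\<in>car x \<Longrightarrow> v\<in>car x \<Longrightarrow> (u,v)\<in>rel x \<longleftrightarrow> (f u, f v) \<in> rel x'"
    "\<And>u. u\<in>car x \<Longrightarrow> lab x' (f u) = lab x u" by (rule iso_witnessE[OF assms(1)], rule that, assumption+)
  obtain g g' where g: "\<And>u. u\<in>car y \<Longrightarrow> g u \<in> car y'" "\<And>v. v\<in>car y' \<Longrightarrow> g' v \<in> car y"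
    "\<And>u. u\<in>car y \<Longrightarrow> g' (g u) = u" "\<And>v. v\<in>car y' \<Longrightarrow> g (g' v) = v"
    "\<And>u v. u\<in>car y \<Longrightarrow> v\<in>car y \<Longrightarrow> (u,v)\<in>rel y \<longleftrightarrow> (g u, g v) \<in> rel y'"
    "\<And>u. u\<in>car y \<Longrightarrow> lab y' (g u) = lab y u" by (rule iso_witnessE[OF assms(2)], rule that, assumption+)
  show ?thesis
  proof (rule iso_witness[where f="\<lambda>n. if even n then 2 * f (n div 2) else 2 * g (n div 2) + 1"
          and g="\<lambda>n. if even n then 2 * f' (n div 2) else 2 * g' (n div 2) + 1"])
    fix u assume "u \<in> car (seq_lp x y)" then show "(if even u then 2 * f (u div 2) else 2 * g (u div 2) + 1) \<in> car (seq_lp x' y')"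
      by (cases rule: car_seqE) (auto simp: car_seq f g)
  next
    fix u assume "u \<in> car (seq_lp x' y')" then show "(if even u then 2 * f' (u div 2) else 2 * g' (u div 2) + 1) \<in> car (seq_lp x y)"
      by (cases rule: car_seqE) (auto simp: car_seq f g)
  next
    fix u assume "u \<in> car (seq_lp x y)" then show "(if even (if even u then 2 * f (u div 2) else 2 * g (u div 2) + 1) then 2 * f' ((if even u then 2 * f (u div 2) else 2 * g (u div 2) + 1) div 2) else 2 * g' ((if even u then 2 * f (u div 2) else 2 * g (u div 2) + 1) div 2) + 1) = u"
      by (cases rule: car_seqE) (auto simp: f g)
  next
    fix u assume "u \<in> car (seq_lp x' y')" then show "(if even (if even u then 2 * f' (u div 2) else 2 * g' (u div 2) + 1) then 2 * f ((if even u then 2 * f' (u div 2) else 2 * g' (u div 2) + 1) div 2) else 2 * g ((if even u then 2 * f' (u div 2) else 2 * g' (u div 2) + 1) div 2) + 1) = u"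
      by (cases rule: car_seqE) (auto simp: f g)
  next
    fix u v assume u: "u \<in> car (seq_lp x y)" and v: "v \<in> car (seq_lp x y)"
    then show "(u, v) \<in> rel (seq_lp x y) \<longleftrightarrow> ((if even u then 2 * f (u div 2) else 2 * g (u div 2) + 1), (if even v then 2 * f (v div 2) else 2 * g (v div 2) + 1)) \<in> rel (seq_lp x' y')"
      using u v by (cases rule: car_seqE[OF u]; cases rule: car_seqE[OF v]) (auto simp: rel_seq f g)
  next
    fix u assume "u \<in> car (seq_lp x y)" then show "lab (seq_lp x' y') (if even u then 2 * f (u div 2) else 2 * g (u div 2) + 1) = lab (seq_lp x y) u"
      by (cases rule: car_seqE) (auto simp: lab_seq f g)
  qed
qed
lemma par_cong: assumes "lp_iso x x'" "lp_iso y y'" shows "lp_iso (par_lp x y) (par_lp x' y')"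
proof -
  obtain f f' where f: "\<And>u. u\<in>car x \<Longrightarrow> f u \<in> car x'" "\<And>v. v\<in>car x' \<Longrightarrow> f' v \<in> car x"
    "\<And>u. u\<in>car x \<Longrightarrow> f' (f u) = u" "\<And>v. v\<in>car x' \<Longrightarrow> f (f' v) = v"
    "\<And>u v. u\<in>car x \<Longrightarrow> v\<in>car x \<Longrightarrow> (u,v)\<in>rel x \<longleftrightarrow> (f u, f v) \<in> rel x'"
    "\<And>u. u\<in>car x \<Longrightarrow> lab x' (f u) = lab x u" by (rule iso_witnessE[OF assms(1)], rule that, assumption+)
  obtain g g' where g: "\<And>u. u\<in>car y \<Longrightarrow> g u \<in> car y'" "\<And>v. v\<in>car y' \<Longrightarrow> g' v \<in> car y"
    "\<And>u. u\<in>car y \<Longrightarrow> g' (g u) = u" "\<And>v. v\<in>car y' \<Longrightarrow> g (g' v) = v"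
    "\<And>u v. u\<in>car y \<Longrightarrow> v\<in>car y \<Longrightarrow> (u,v)\<in>rel y \<longleftrightarrow> (g u, g v) \<in> rel y'"
    "\<And>u. u\<in>car y \<Longrightarrow> lab y' (g u) = lab y u" by (rule iso_witnessE[OF assms(2)], rule that, assumption+)
  show ?thesis
  proof (rule iso_witness[where f="\<lambda>n. if even n then 2 * f (n div 2) else 2 * g (n div 2) + 1"
          and g="\<lambda>n. if even n then 2 * f' (n div 2) else 2 * g' (n div 2) + 1"])
    fix u assume "u \<in> car (par_lp x y)" then show "(if even u then 2 * f (u div 2) else 2 * g (u div 2) + 1) \<in> car (par_lp x' y')"
      by (cases rule: car_parE) (auto simp: car_par f g)
  next
    fix u assume "u \<in> car (par_lp x' y')" then show "(if even u then 2 * f' (u div 2) else 2 * g' (u div 2) + 1) \<in> car (par_lp x y)"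
      by (cases rule: car_parE) (auto simp: car_par f g)
  next
    fix u assume "u \<in> car (par_lp x y)" then show "(if even (if even u then 2 * f (u div 2) else 2 * g (u div 2) + 1) then 2 * f' ((if even u then 2 * f (u div 2) else 2 * g (u div 2) + 1) div 2) else 2 * g' ((if even u then 2 * f (u div 2) else 2 * g (u div 2) + 1) div 2) + 1) = u"
      by (cases rule: car_parE) (auto simp: f g)
  next
    fix u assume "u \<in> car (par_lp x' y')" then show "(if even (if even u then 2 * f' (u div 2) else 2 * g' (u div 2) + 1) then 2 * f ((if even u then 2 * f' (u div 2) else 2 * g' (u div 2) + 1) div 2) else 2 * g ((if even u then 2 * f' (u div 2) else 2 * g' (u div 2) + 1) div 2) + 1) = u"
      by (cases rule: car_parE) (auto simp: f g)
  next
    fix u v assume u: "u \<in> car (par_lp x y)" and v: "v \<in> car (par_lp x y)"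
    then show "(u, v) \<in> rel (par_lp x y) \<longleftrightarrow> ((if even u then 2 * f (u div 2) else 2 * g (u div 2) + 1), (if even v then 2 * f (v div 2) else 2 * g (v div 2) + 1)) \<in> rel (par_lp x' y')"
      using u v by (cases rule: car_parE[OF u]; cases rule: car_parE[OF v]) (auto simp: rel_par f g)
  next
    fix u assume "u \<in> car (par_lp x y)" then show "lab (par_lp x' y') (if even u then 2 * f (u div 2) else 2 * g (u div 2) + 1) = lab (par_lp x y) u"
      by (cases rule: car_parE) (auto simp: lab_par f g)
  qed
qed
lemma car_empty[simp]: "car empty_lp = {}" by (simp add: empty_lp_def)
lemma rel_empty[simp]: "rel empty_lp = {}" by (simp add: empty_lp_def)
lemma odd_div[simp]: "odd (u::nat) \<Longrightarrow> (u - Suc 0) div 2 = u div 2" by presburger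

lemma seq_unit_l: "lp_iso (seq_lp empty_lp x) x"
  by (rule iso_witness[where f="\<lambda>n. n div 2" and g="\<lambda>n. 2*n+1"]) (auto simp: lp_simps)

lemma seq_unit_r: "lp_iso (seq_lp x empty_lp) x"
  by (rule iso_witness[where f="\<lambda>n. n div 2" and g="\<lambda>n. 2*n"]) (auto simp: lp_simps)

lemma par_unit_r: "lp_iso (par_lp x empty_lp) x"
  by (rule iso_witness[where f="\<lambda>n. n div 2" and g="\<lambda>n. 2*n"]) (auto simp: lp_simps)

lemma par_comm: "lp_iso (par_lp x y) (par_lp y x)"
  by (rule iso_witness[where f="\<lambda>n. if even n then n+1 else n-1" and g="\<lambda>n. if even n then n+1 else n-1"])
    (auto simp: lp_simps)

definition fa :: "nat \<Rightarrow> nat" where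
  "fa n = (if even n then (if even (n div 2) then 2*(n div 2 div 2) else 2*(2*(n div 2 div 2))+1) else 2*(2*(n div 2)+1)+1)"
definition ga :: "nat \<Rightarrow> nat" where
  "ga n = (if even n then 2*(2*(n div 2)) else (if even (n div 2) then 2*(2*(n div 2 div 2)+1) else 2*(n div 2 div 2)+1))"


lemma car_seq3E: assumes "n \<in> car (seq_lp (seq_lp u v) w)"
  obtains k where "n = 2*(2*k)" "k \<in> car u" | k where "n = 2*(2*k+1)" "k \<in> car v" | k where "n = 2*k+1" "k \<in> car w"
  using assms by (elim car_seqE) auto
lemma car_seq3E': assumes "n \<in> car (seq_lp u (seq_lp v w))"
  obtains k where "n = 2*k" "k \<in> car u" | k where "n = 2*(2*k)+1" "k \<in> car v" | k where "n = 2*(2*k+1)+1" "k \<in> car w"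
  using assms by (elim car_seqE) auto
lemma car_par3E: assumes "n \<in> car (par_lp (par_lp u v) w)"
  obtains k where "n = 2*(2*k)" "k \<in> car u" | k where "n = 2*(2*k+1)" "k \<in> car v" | k where "n = 2*k+1" "k \<in> car w"
  using assms by (elim car_parE) auto
lemma car_par3E': assumes "n \<in> car (par_lp u (par_lp v w))"
  obtains k where "n = 2*k" "k \<in> car u" | k where "n = 2*(2*k)+1" "k \<in> car v" | k where "n = 2*(2*k+1)+1" "k \<in> car w"
  using assms by (elim car_parE) auto

lemma seq_assoc: "lp_iso (seq_lp (seq_lp u v) w) (seq_lp u (seq_lp v w))"
proof (rule iso_witness[where f=fa and g=ga])
  fix n assume "n \<in> car (seq_lp (seq_lp u v) w)" then show "fa n \<in> car (seq_lp u (seq_lp v w))"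
    by (cases rule: car_seq3E) (auto simp: fa_def lp_simps)
next
  fix n assume "n \<in> car (seq_lp u (seq_lp v w))" then show "ga n \<in> car (seq_lp (seq_lp u v) w)"
    by (cases rule: car_seq3E') (auto simp: ga_def lp_simps)
next
  fix n assume "n \<in> car (seq_lp (seq_lp u v) w)" then show "ga (fa n) = n"
    by (cases rule: car_seq3E) (auto simp: fa_def ga_def)
next
  fix n assume "n \<in> car (seq_lp u (seq_lp v w))" then show "fa (ga n) = n"
    by (cases rule: car_seq3E') (auto simp: fa_def ga_def)
next
  fix n m assume n: "n \<in> car (seq_lp (seq_lp u v) w)" and m: "m \<in> car (seq_lp (seq_lp u v) w)"
  show "(n, m) \<in> rel (seq_lp (seq_lp u v) w) \<longleftrightarrow> (fa n, fa m) \<in> rel (seq_lp u (seq_lp v w))"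
    using n m by (cases rule: car_seq3E[OF n]; cases rule: car_seq3E[OF m]) (auto simp: fa_def lp_simps)
next
  fix n assume "n \<in> car (seq_lp (seq_lp u v) w)" then show "lab (seq_lp u (seq_lp v w)) (fa n) = lab (seq_lp (seq_lp u v) w) n"
    by (cases rule: car_seq3E) (auto simp: fa_def lp_simps)
qed

lemma par_assoc: "lp_iso (par_lp (par_lp u v) w) (par_lp u (par_lp v w))"
proof (rule iso_witness[where f=fa and g=ga])
  fix n assume "n \<in> car (par_lp (par_lp u v) w)" then show "fa n \<in> car (par_lp u (par_lp v w))"
    by (cases rule: car_par3E) (auto simp: fa_def lp_simps)
next
  fix n assume "n \<in> car (par_lp u (par_lp v w))" then show "ga n \<in> car (par_lp (par_lp u v) w)"
    by (cases rule: car_par3E') (auto simp: ga_def lp_simps)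
next
  fix n assume "n \<in> car (par_lp (par_lp u v) w)" then show "ga (fa n) = n"
    by (cases rule: car_par3E) (auto simp: fa_def ga_def)
next
  fix n assume "n \<in> car (par_lp u (par_lp v w))" then show "fa (ga n) = n"
    by (cases rule: car_par3E') (auto simp: fa_def ga_def)
next
  fix n m assume n: "n \<in> car (par_lp (par_lp u v) w)" and m: "m \<in> car (par_lp (par_lp u v) w)"
  show "(n, m) \<in> rel (par_lp (par_lp u v) w) \<longleftrightarrow> (fa n, fa m) \<in> rel (par_lp u (par_lp v w))"
    using n m by (cases rule: car_par3E[OF n]; cases rule: car_par3E[OF m]) (auto simp: fa_def lp_simps)
next
  fix n assume "n \<in> car (par_lp (par_lp u v) w)" then show "lab (par_lp u (par_lp v w)) (fa n) = lab (par_lp (par_lp u v) w) n"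
    by (cases rule: car_par3E) (auto simp: fa_def lp_simps)
qed


lemma pom_seq_pom: "wf_lp x \<Longrightarrow> wf_lp y \<Longrightarrow> pom_seq (pom x) (pom y) = pom (seq_lp x y)"
  unfolding pom_seq_def
  by (rule pom_eq, rule seq_cong; rule iso_sym, rule rep_pom)

lemma pom_par_pom: "wf_lp x \<Longrightarrow> wf_lp y \<Longrightarrow> pom_par (pom x) (pom y) = pom (par_lp x y)"
  unfolding pom_par_def
  by (rule pom_eq, rule par_cong; rule iso_sym, rule rep_pom)

lemma pom_cases: obtains x where "wf_lp x" "U = pom x"
  using rep_wf pom_rep by metis

lemma seq_assoc_p: "pom_seq (pom_seq U V) W = pom_seq U (pom_seq V W)"
proof -
  obtain u v w where "wf_lp u" "wf_lp v" "wf_lp w" "U = pom u" "V = pom v" "W = pom w"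
    by (metis pom_cases)
  then show ?thesis by (simp add: pom_seq_pom wf_seq pom_eq[OF seq_assoc])
qed

lemma par_assoc_p: "pom_par (pom_par U V) W = pom_par U (pom_par V W)"
proof -
  obtain u v w where "wf_lp u" "wf_lp v" "wf_lp w" "U = pom u" "V = pom v" "W = pom w"
    by (metis pom_cases)
  then show ?thesis by (simp add: pom_par_pom wf_par pom_eq[OF par_assoc])
qed

lemma par_comm_p: "pom_par U V = pom_par V U"
proof -
  obtain u v where "wf_lp u" "wf_lp v" "U = pom u" "V = pom v"
    by (metis pom_cases)
  then show ?thesis by (simp add: pom_par_pom wf_par pom_eq[OF par_comm])
qed

lemma seq_one_l[simp]: "pom_seq pom_one U = U"
proof -
  obtain u where "wf_lp u" "U = pom u" by (metis pom_cases)
  then show ?thesis unfolding pom_one_def by (simp add: pom_seq_pom wf_empty pom_eq[OF seq_unit_l])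
qed

lemma seq_one_r[simp]: "pom_seq U pom_one = U"
proof -
  obtain u where "wf_lp u" "U = pom u" by (metis pom_cases)
  then show ?thesis unfolding pom_one_def by (simp add: pom_seq_pom wf_empty pom_eq[OF seq_unit_r])
qed

lemma par_one_r[simp]: "pom_par U pom_one = U"
proof -
  obtain u where "wf_lp u" "U = pom u" by (metis pom_cases)
  then show ?thesis unfolding pom_one_def by (simp add: pom_par_pom wf_empty pom_eq[OF par_unit_r])
qed

lemma par_lcomm_p: "pom_par U (pom_par V W) = pom_par V (pom_par U W)"
  by (metis par_assoc_p par_comm_p)

lemma lpar_lcomm: "lpar L (lpar M X) = lpar M (lpar L X)"
  unfolding lpar_def using par_lcomm_p by blast

lemma lpar_one_r: "lpar L {pom_one} = L"
  unfolding lpar_def by auto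

lemma lpar_comm: "lpar L M = lpar M L"
  unfolding lpar_def using par_comm_p by blast

inductive_set sstar :: "'a pomset set \<Rightarrow> 'a pomset set" for L where
  ss_one: "pom_one \<in> sstar L"
| ss_step: "x \<in> L \<Longrightarrow> y \<in> sstar L \<Longrightarrow> pom_seq x y \<in> sstar L"

lemma sstar_app: "x \<in> sstar L \<Longrightarrow> y \<in> sstar L \<Longrightarrow> pom_seq x y \<in> sstar L"
  by (induction rule: sstar.induct) (auto simp: seq_assoc_p intro: ss_step)

lemma sstar_single: "x \<in> L \<Longrightarrow> x \<in> sstar L"
  using ss_step[OF _ ss_one] by fastforce

lemma lstar_sstar: "lstar L = sstar L"
proof
  show "lstar L \<subseteq> sstar L"
  proof
    fix x assume "x \<in> lstar L"
    then obtain n where "x \<in> lpow L n" unfolding lstar_def by blast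
    then show "x \<in> sstar L"
      by (induction n arbitrary: x) (auto simp: lseq_def intro: ss_one ss_step)
  qed
  show "sstar L \<subseteq> lstar L"
  proof
    fix x assume "x \<in> sstar L"
    then show "x \<in> lstar L"
    proof (induction rule: sstar.induct)
      case ss_one then show ?case unfolding lstar_def using lpow.simps(1) by blast
    next
      case (ss_step x y)
      then obtain n where "y \<in> lpow L n" unfolding lstar_def by blast
      then have "pom_seq x y \<in> lpow L (Suc n)" using ss_step by (auto simp: lseq_def)
      then show ?case unfolding lstar_def by blast
    qed
  qed
qed


lemma sp_par_list: "(\<forall>i<length Us. Us ! i \<in> sp) \<Longrightarrow> pom_par_list Us \<in> sp"
proof (induction Us)
  case Nil then show ?case by (simp add: pom_par_list_def sp_one)
next
  case (Cons U Us)
  then have "U \<in> sp" "\<forall>i<length Us. Us ! i \<in> sp" by (auto dest: spec[of _ 0] spec[of _ "Suc _"])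
  then show ?case using Cons by (simp add: pom_par_list_def sp_par)
qed

lemma run_sp: "run A q U q' \<Longrightarrow> U \<in> sp"
proof (induction rule: run.induct)
  case (run_par q' q qs Us)
  then show ?case by (intro sp_par_list) auto
qed (auto intro: sp.intros)

lemma run_states: assumes wf: "pa_wf A" shows "run A q U q' \<Longrightarrow> q \<in> states A \<and> q' \<in> states A"
proof (induction rule: run.induct)
  case (run_sym q' q a) then show ?case using wf unfolding pa_wf_def by blast
next
  case (run_par q' q qs Us) then show ?case using wf unfolding pa_wf_def by blast
qed auto

definition Fm :: "'a pa \<Rightarrow> nat multiset \<Rightarrow> 'a pomset set" where
  "Fm A \<phi> = {pom_par_list Us | Us qs. mset qs = \<phi> \<and> length Us = length qs \<and>
      (\<forall>i<length qs. Us ! i \<in> lang_pa A (qs ! i))}"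

inductive stepA :: "'a pa \<Rightarrow> nat \<Rightarrow> 'a pomset \<Rightarrow> nat \<Rightarrow> bool" for A where
  st_sym: "q' \<in> delta A q a \<Longrightarrow> stepA A q (pom_sym a) q'"
| st_par: "q' \<in> gamma A q \<phi> \<Longrightarrow> U \<in> Fm A \<phi> \<Longrightarrow> stepA A q U q'"

inductive runN :: "'a pa \<Rightarrow> nat \<Rightarrow> 'a pomset \<Rightarrow> nat \<Rightarrow> bool" for A where
  rn_one: "q \<in> states A \<Longrightarrow> runN A q pom_one q"
| rn_step: "stepA A q U q1 \<Longrightarrow> runN A q1 V q' \<Longrightarrow> runN A q (pom_seq U V) q'"

lemma runN_trans: "runN A q U q'' \<Longrightarrow> runN A q'' V q' \<Longrightarrow> runN A q (pom_seq U V) q'"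
  by (induction rule: runN.induct) (auto simp: seq_assoc_p intro: rn_step)

lemma stepA_states: assumes wf: "pa_wf A" shows "stepA A q U q' \<Longrightarrow> q \<in> states A \<and> q' \<in> states A"
  by (induction rule: stepA.induct) (insert wf, unfold pa_wf_def, blast+)

lemma stepA_runN: "pa_wf A \<Longrightarrow> stepA A q U q' \<Longrightarrow> runN A q U q'"
  using rn_step[OF _ rn_one, of A q U q'] stepA_states by fastforce

lemma runN_states: assumes wf: "pa_wf A" shows "runN A q U q' \<Longrightarrow> q \<in> states A"
  by (induction rule: runN.induct) (auto dest: stepA_states[OF wf])

lemma stepA_run: "stepA A q U q' \<Longrightarrow> run A q U q'"
proof (induction rule: stepA.induct)
  case (st_sym q' q a) then show ?case by (rule run_sym)
next
  case (st_par q' q \<phi> U)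
  then obtain Us qs where "U = pom_par_list Us" "mset qs = \<phi>" "length Us = length qs"
      "\<forall>i<length qs. Us ! i \<in> lang_pa A (qs ! i)" unfolding Fm_def by blast
  then show ?case using st_par(1) by (auto simp: lang_pa_def intro!: run_par)
qed

lemma runN_run: "runN A q U q' \<Longrightarrow> run A q U q'"
  by (induction rule: runN.induct) (auto intro: run.intros stepA_run)

lemma run_runN: assumes wf: "pa_wf A" shows "run A q U q' \<Longrightarrow> runN A q U q'"
proof (induction rule: run.induct)
  case (run_one q) then show ?case by (rule rn_one)
next
  case (run_sym q' q a) then show ?case by (intro stepA_runN[OF wf] st_sym)
next
  case (run_seq q U q'' V q') then show ?case by (blast intro: runN_trans)
next
  case (run_par q' q qs Us)
  have "pom_par_list Us \<in> Fm A (mset qs)" unfolding Fm_def lang_pa_def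
    using run_par(2,3) run_sp by blast
  then show ?case using run_par by (intro stepA_runN[OF wf] st_par) auto
qed

lemma lang_N: "pa_wf A \<Longrightarrow> lang_pa A q = {U. \<exists>f\<in>final A. runN A q U f}"
  unfolding lang_pa_def using run_runN runN_run run_sp by blast

definition parF :: "'a pa \<Rightarrow> nat \<Rightarrow> 'a pomset set \<Rightarrow> 'a pomset set" where
  "parF A r X = lpar (lang_pa A r) X"

interpretation pcf: comp_fun_commute "parF A" for A
  by unfold_locales (auto simp: parF_def fun_eq_iff lpar_lcomm)

lemma Fm_list: "{pom_par_list Us | Us. length Us = length qs \<and> (\<forall>i<length qs. Us ! i \<in> lang_pa A (qs ! i))}
   = fold_mset (parF A) {pom_one} (mset qs)"
proof (induction qs)
  case Nil then show ?case by (simp add: pom_par_list_def)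
next
  case (Cons r qs)
  have "{pom_par_list Us | Us. length Us = length (r # qs) \<and> (\<forall>i<length (r # qs). Us ! i \<in> lang_pa A ((r # qs) ! i))}
      = lpar (lang_pa A r) {pom_par_list Us | Us. length Us = length qs \<and> (\<forall>i<length qs. Us ! i \<in> lang_pa A (qs ! i))}"
  proof (rule set_eqI, rule iffI)
    fix W assume "W \<in> {pom_par_list Us | Us. length Us = length (r # qs) \<and> (\<forall>i<length (r # qs). Us ! i \<in> lang_pa A ((r # qs) ! i))}"
    then obtain Us where u: "W = pom_par_list Us" "length Us = Suc (length qs)" "\<forall>i<Suc (length qs). Us ! i \<in> lang_pa A ((r # qs) ! i)"
      by auto
    then obtain U Us' where us: "Us = U # Us'" by (cases Us) auto
    have "U \<in> lang_pa A r" using u(3) us by (auto dest: spec[of _ 0])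
    moreover have "\<forall>i<length qs. Us' ! i \<in> lang_pa A (qs ! i)"
    proof (intro allI impI)
      fix i assume "i < length qs" then show "Us' ! i \<in> lang_pa A (qs ! i)"
        using u(3) us by (auto dest: spec[of _ "Suc i"])
    qed
    moreover have "W = pom_par U (pom_par_list Us')" using u(1) us by (simp add: pom_par_list_def)
    ultimately show "W \<in> lpar (lang_pa A r) {pom_par_list Us | Us. length Us = length qs \<and> (\<forall>i<length qs. Us ! i \<in> lang_pa A (qs ! i))}"
      unfolding lpar_def using u(2) us by auto
  next
    fix W assume "W \<in> lpar (lang_pa A r) {pom_par_list Us | Us. length Us = length qs \<and> (\<forall>i<length qs. Us ! i \<in> lang_pa A (qs ! i))}"
    then obtain U Us where "W = pom_par U (pom_par_list Us)" "U \<in> lang_pa A r" "length Us = length qs"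
        "\<forall>i<length qs. Us ! i \<in> lang_pa A (qs ! i)" unfolding lpar_def by blast
    then show "W \<in> {pom_par_list Us | Us. length Us = length (r # qs) \<and> (\<forall>i<length (r # qs). Us ! i \<in> lang_pa A ((r # qs) ! i))}"
      by (auto simp: pom_par_list_def nth_Cons' intro!: exI[of _ "U # Us"])
  qed
  also have "\<dots> = parF A r (fold_mset (parF A) {pom_one} (mset qs))" unfolding Cons.IH by (rule parF_def[symmetric])
  also have "\<dots> = fold_mset (parF A) {pom_one} (mset (r # qs))" by (simp only: mset.simps pcf.fold_mset_add_mset)
  finally show ?case .
qed

lemma Fm_fold: "Fm A \<phi> = fold_mset (parF A) {pom_one} \<phi>"
proof -
  obtain qs where q: "mset qs = \<phi>" using ex_mset by blast
  have "Fm A \<phi> = (\<Union>qs\<in>{qs. mset qs = \<phi>}. {pom_par_list Us | Us. length Us = length qs \<and> (\<forall>i<length qs. Us ! i \<in> lang_pa A (qs ! i))})"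
    unfolding Fm_def by blast
  also have "\<dots> = fold_mset (parF A) {pom_one} \<phi>" unfolding Fm_list using q by auto
  finally show ?thesis .
qed

lemma Fm_single: "Fm A {#r#} = lang_pa A r"
  by (simp add: Fm_fold pcf.fold_mset_add_mset) (simp add: parF_def lpar_one_r)

lemma Fm_pair: "Fm A {#r, s#} = lpar (lang_pa A r) (lang_pa A s)"
  by (simp add: Fm_fold pcf.fold_mset_add_mset) (simp add: parF_def lpar_one_r)

lemma Fm_sem: "(\<forall>r\<in>#\<phi>. \<exists>e. lang_pa A r = sem e) \<Longrightarrow> \<exists>e. Fm A \<phi> = sem e"
proof (induction \<phi>)
  case empty
  have "Fm A {#} = sem One" by (simp add: Fm_fold)
  then show ?case by blast
next
  case (add r \<phi>)
  then obtain e1 e2 where "lang_pa A r = sem e1" "Fm A \<phi> = sem e2" by auto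
  then have "Fm A (add_mset r \<phi>) = sem (Par e1 e2)" by (simp add: Fm_fold pcf.fold_mset_add_mset) (simp add: parF_def)
  then show ?case by blast
qed


inductive pw :: "(nat \<Rightarrow> nat \<Rightarrow> 'a pomset set) \<Rightarrow> nat set \<Rightarrow> nat \<Rightarrow> 'a pomset \<Rightarrow> nat \<Rightarrow> bool"
  for Lab S where
  pw_atom: "U \<in> Lab i j \<Longrightarrow> pw Lab S i U j"
| pw_trans: "pw Lab S i U k \<Longrightarrow> k \<in> S \<Longrightarrow> pw Lab S k V j \<Longrightarrow> pw Lab S i (pom_seq U V) j"

lemma pw_mono: "pw Lab S i U j \<Longrightarrow> S \<subseteq> T \<Longrightarrow> pw Lab T i U j"
  by (induction rule: pw.induct) (auto intro: pw.intros)

lemma pw_star: assumes "y \<in> sstar {u. pw Lab S k u k}" "pw Lab (insert k S) i x k"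
  shows "pw Lab (insert k S) i (pom_seq x y) k"
  using assms(1,2)
proof (induction y arbitrary: x rule: sstar.induct)
  case ss_one then show ?case by simp
next
  case (ss_step a y)
  have "pw Lab S k a k" using ss_step.hyps(1) by simp
  then have "pw Lab (insert k S) k a k" by (rule pw_mono[OF _ subset_insertI])
  then have "pw Lab (insert k S) i (pom_seq x a) k"
    using pw.pw_trans[OF ss_step.prems insertI1] by blast
  then have "pw Lab (insert k S) i (pom_seq (pom_seq x a) y) k" by (rule ss_step.IH)
  then show ?case by (simp add: seq_assoc_p)
qed

lemma sstar_snoc: "y \<in> sstar L \<Longrightarrow> z \<in> L \<Longrightarrow> pom_seq y z \<in> sstar L"
  using sstar_app sstar_single by blast

lemma pw_elim:
  "pw Lab (insert k S) i U j \<longleftrightarrow> pw Lab S i U j \<or>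
    (\<exists>x y z. U = pom_seq (pom_seq x y) z \<and> pw Lab S i x k \<and> y \<in> sstar {u. pw Lab S k u k} \<and> pw Lab S k z j)"
  (is "?L \<longleftrightarrow> ?R i U j")
proof
  assume "?L" then show "?R i U j"
  proof (induction rule: pw.induct)
    case (pw_atom U i j) then show ?case by (auto intro: pw.intros)
  next
    case (pw_trans i U m V j)
    let ?M = "sstar {u. pw Lab S k u k}"
    show ?case
    proof (cases "m = k")
      case True
      show ?thesis
      proof (cases "pw Lab S i U m")
        case u1: True
        show ?thesis
        proof (cases "pw Lab S m V j")
          case True
          then show ?thesis using u1 \<open>m = k\<close> ss_one[of "{u. pw Lab S k u k}"]
            by (intro disjI2 exI[of _ U] exI[of _ pom_one] exI[of _ V]) simp
        next
          case False
          then obtain x y z where v: "V = pom_seq (pom_seq x y) z" "pw Lab S m x k" "y \<in> ?M" "pw Lab S k z j"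
            using pw_trans.IH(2) by blast
          have "x \<in> ?M" using v \<open>m = k\<close> by (intro sstar_single) simp
          then have "pom_seq x y \<in> ?M" using v(3) by (rule sstar_app)
          then show ?thesis using u1 v \<open>m = k\<close>
            by (intro disjI2 exI[of _ U] exI[of _ "pom_seq x y"] exI[of _ z]) (simp add: seq_assoc_p)
        qed
      next
        case False
        then obtain x y z where u: "U = pom_seq (pom_seq x y) z" "pw Lab S i x k" "y \<in> ?M" "pw Lab S k z m"
          using pw_trans.IH(1) by blast
        have yz: "pom_seq y z \<in> ?M" using u \<open>m = k\<close> by (intro sstar_snoc) auto
        show ?thesis
        proof (cases "pw Lab S m V j")
          case True
          then show ?thesis using u yz \<open>m = k\<close>
            by (intro disjI2 exI[of _ x] exI[of _ "pom_seq y z"] exI[of _ V]) (simp add: seq_assoc_p)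
        next
          case False
          then obtain x' y' z' where v: "V = pom_seq (pom_seq x' y') z'" "pw Lab S m x' k" "y' \<in> ?M" "pw Lab S k z' j"
            using pw_trans.IH(2) by blast
          have "x' \<in> ?M" using v \<open>m = k\<close> by (intro sstar_single) simp
          then have "pom_seq x' y' \<in> ?M" using v(3) by (rule sstar_app)
          then have "pom_seq (pom_seq y z) (pom_seq x' y') \<in> ?M" using yz by (rule sstar_app[rotated])
          then show ?thesis using u v \<open>m = k\<close>
            by (intro disjI2 exI[of _ x] exI[of _ "pom_seq (pom_seq y z) (pom_seq x' y')"] exI[of _ z']) (simp add: seq_assoc_p)
        qed
      qed
    next
      case False
      then have mS: "m \<in> S" using pw_trans by simp
      show ?thesis
      proof (cases "pw Lab S i U m")
        case u1: True
        show ?thesis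
        proof (cases "pw Lab S m V j")
          case True
          then show ?thesis using pw.pw_trans[OF u1 mS] by blast
        next
          case False
          then obtain x y z where v: "V = pom_seq (pom_seq x y) z" "pw Lab S m x k" "y \<in> ?M" "pw Lab S k z j"
            using pw_trans.IH(2) by blast
          have "pw Lab S i (pom_seq U x) k" using pw.pw_trans[OF u1 mS v(2)] .
          then show ?thesis using v
            by (intro disjI2 exI[of _ "pom_seq U x"] exI[of _ y] exI[of _ z]) (simp add: seq_assoc_p)
        qed
      next
        case False
        then obtain x y z where u: "U = pom_seq (pom_seq x y) z" "pw Lab S i x k" "y \<in> ?M" "pw Lab S k z m"
          using pw_trans.IH(1) by blast
        show ?thesis
        proof (cases "pw Lab S m V j")
          case True
          have "pw Lab S k (pom_seq z V) j" using pw.pw_trans[OF u(4) mS True] .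
          then show ?thesis using u
            by (intro disjI2 exI[of _ x] exI[of _ y] exI[of _ "pom_seq z V"]) (simp add: seq_assoc_p)
        next
          case False
          then obtain x' y' z' where v: "V = pom_seq (pom_seq x' y') z'" "pw Lab S m x' k" "y' \<in> ?M" "pw Lab S k z' j"
            using pw_trans.IH(2) by blast
          have "pw Lab S k (pom_seq z x') k" using pw.pw_trans[OF u(4) mS v(2)] .
          then have "pom_seq z x' \<in> ?M" by (intro sstar_single) auto
          then have "pom_seq (pom_seq z x') y' \<in> ?M" using v(3) by (rule sstar_app)
          then have "pom_seq y (pom_seq (pom_seq z x') y') \<in> ?M" using u(3) sstar_app by blast
          then show ?thesis using u v
            by (intro disjI2 exI[of _ x] exI[of _ "pom_seq y (pom_seq (pom_seq z x') y')"] exI[of _ z']) (simp add: seq_assoc_p)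
        qed
      qed
    qed
  qed
next
  assume "?R i U j"
  then show ?L
  proof
    assume "pw Lab S i U j" then show ?L by (rule pw_mono[OF _ subset_insertI])
  next
    assume "\<exists>x y z. U = pom_seq (pom_seq x y) z \<and> pw Lab S i x k \<and> y \<in> sstar {u. pw Lab S k u k} \<and> pw Lab S k z j"
    then obtain x y z where u: "U = pom_seq (pom_seq x y) z" "pw Lab S i x k" "y \<in> sstar {u. pw Lab S k u k}" "pw Lab S k z j"
      by blast
    have 1: "pw Lab (insert k S) i (pom_seq x y) k" using pw_star[OF u(3) pw_mono[OF u(2) subset_insertI]] .
    have 2: "pw Lab (insert k S) k z j" using pw_mono[OF u(4) subset_insertI] .
    show ?L unfolding u(1) using pw.pw_trans[OF 1 insertI1 2] .
  qed
qed

lemma pw_empty: "pw Lab {} i U j \<longleftrightarrow> U \<in> Lab i j"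
proof
  assume "pw Lab {} i U j" then show "U \<in> Lab i j" by (induction rule: pw.induct) auto
qed (rule pw_atom)

lemma lseq3: "lseq (lseq A B) C = {pom_seq (pom_seq x y) z | x y z. x \<in> A \<and> y \<in> B \<and> z \<in> C}"
  unfolding lseq_def by blast

lemma kleene:
  assumes "finite S" and lab: "\<And>i j. \<exists>e. Lab i j = sem e"
  shows "\<exists>e. {U. pw Lab S i U j} = sem e"
  using assms(1)
proof (induction S arbitrary: i j rule: finite_induct)
  case empty
  obtain e where "Lab i j = sem e" using lab by blast
  then show ?case by (auto simp: pw_empty)
next
  case (insert k S)
  obtain e1 where e1: "{U. pw Lab S i U j} = sem e1" using insert.IH[of i j] by blast
  obtain e2 where e2: "{U. pw Lab S i U k} = sem e2" using insert.IH[of i k] by blast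
  obtain e3 where e3: "{U. pw Lab S k U k} = sem e3" using insert.IH[of k k] by blast
  obtain e4 where e4: "{U. pw Lab S k U j} = sem e4" using insert.IH[of k j] by blast
  have "sem (Plus e1 (Seq (Seq e2 (Star e3)) e4)) = {U. pw Lab S i U j} \<union>
     {pom_seq (pom_seq x y) z | x y z. pw Lab S i x k \<and> y \<in> sstar {u. pw Lab S k u k} \<and> pw Lab S k z j}"
    unfolding sem.simps lstar_sstar lseq3 e1[symmetric] e2[symmetric] e3[symmetric] e4[symmetric] by simp
  also have "\<dots> = {U. pw Lab (insert k S) i U j}"
    unfolding pw_elim by blast
  finally have "{U. pw Lab (insert k S) i U j} = sem (Plus e1 (Seq (Seq e2 (Star e3)) e4))" by simp
  then show ?case by blast
qed

lemma finite_union_sem: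
  assumes "finite I" "\<And>x. x \<in> I \<Longrightarrow> \<exists>e. F x = sem e"
  shows "\<exists>e. (\<Union>x\<in>I. F x) = sem e"
  using assms
proof (induction I rule: finite_induct)
  case empty
  have "(\<Union>x\<in>{}. F x) = sem Zero" by simp
  then show ?case by (rule exI)
next
  case (insert a I)
  obtain e1 where e1: "F a = sem e1" using insert.prems[of a] by auto
  have "\<And>x. x \<in> I \<Longrightarrow> \<exists>e. F x = sem e" using insert.prems by simp
  then obtain e2 where e2: "(\<Union>x\<in>I. F x) = sem e2" using insert.IH by auto
  have "(\<Union>x\<in>insert a I. F x) = sem (Plus e1 e2)" using e1 e2 by simp
  then show ?case by (rule exI)
qed


definition down :: "'a pa \<Rightarrow> nat \<Rightarrow> nat set" where
  "down A q = {p. (p, q) \<in> supp A}"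

lemma stepA_supp: "stepA A q U q' \<Longrightarrow> (q', q) \<in> supp_step A"
proof (induction rule: stepA.induct)
  case (st_sym q' q a) then show ?case unfolding supp_step_def by blast
next
  case (st_par q' q \<phi> U) then show ?case unfolding supp_step_def by blast
qed

lemma child_supp: "r \<in># \<phi> \<Longrightarrow> gamma A q \<phi> \<noteq> {} \<Longrightarrow> (r, q) \<in> supp_step A"
  unfolding supp_step_def by blast

lemma down_trans: "p \<in> down A q \<Longrightarrow> (p', p) \<in> supp_step A \<Longrightarrow> p' \<in> down A q"
  unfolding down_def supp_def by (simp add: converse_rtrancl_into_rtrancl)

lemma down_mono: "p \<in> down A q \<Longrightarrow> down A p \<subseteq> down A q"
  unfolding down_def supp_def by (auto intro: rtrancl_trans)

lemma down_self: "q \<in> down A q"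
  unfolding down_def supp_def by simp

context
  fixes A :: "('a::finite) pa"
  assumes wf: "pa_wf A" and fin: "finite (states A)" and fac: "fork_acyclic A"
begin

lemma supp_step_states: "(p, q) \<in> supp_step A \<Longrightarrow> p \<in> states A"
  using wf unfolding supp_step_def pa_wf_def by blast

lemma down_sub: "down A q \<subseteq> insert q (states A)"
proof
  fix p assume "p \<in> down A q"
  then have "(p, q) \<in> (supp_step A)\<^sup>*" unfolding down_def supp_def by simp
  then show "p \<in> insert q (states A)"
    by (cases rule: converse_rtranclE) (auto dest: supp_step_states)
qed

lemma down_fin: "finite (down A q)"
  using down_sub fin finite_subset by blast

lemma child_smaller:
  assumes "r \<in># \<phi>" "gamma A q \<phi> \<noteq> {}" "q \<in> down A q0"
  shows "card (down A r) < card (down A q0)"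
proof -
  have rs: "(r, q) \<in> supp_step A" using child_supp[OF assms(1,2)] .
  have "r \<in> down A q" using down_trans[OF down_self rs] .
  then have "down A r \<subseteq> down A q" by (rule down_mono)
  also have "\<dots> \<subseteq> down A q0" using assms(3) by (rule down_mono)
  finally have sub: "down A r \<subseteq> down A q0" .
  have "(q, r) \<notin> supp A" using fac assms(1,2) unfolding fork_acyclic_def by blast
  then have "q \<notin> down A r" unfolding down_def by simp
  then have "down A r \<subset> down A q0" using sub assms(3) by blast
  then show ?thesis using down_fin by (rule psubset_card_mono[rotated])
qed

lemma step_decomp: "{U. stepA A i U j} = (\<Union>a\<in>{a. j \<in> delta A i a}. {pom_sym a}) \<union>
   (\<Union>\<phi>\<in>{\<phi>. gamma A i \<phi> \<noteq> {} \<and> j \<in> gamma A i \<phi>}. Fm A \<phi>)"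
  by (auto simp: stepA.simps)

lemma lab_sem:
  assumes "i \<in> down A q0" and IH: "\<And>r. card (down A r) < card (down A q0) \<Longrightarrow> \<exists>e. lang_pa A r = sem e"
  shows "\<exists>e. {U. stepA A i U j} = sem e"
proof -
  have "\<exists>e. (\<Union>a\<in>{a. j \<in> delta A i a}. {pom_sym a}) = sem e"
  proof (rule finite_union_sem)
    fix a show "\<exists>e. {pom_sym a} = sem e" by (rule exI[of _ "Sym a"]) simp
  qed simp
  then obtain e1 where e1: "(\<Union>a\<in>{a. j \<in> delta A i a}. {pom_sym a}) = sem e1" by blast
  have "\<exists>e. (\<Union>\<phi>\<in>{\<phi>. gamma A i \<phi> \<noteq> {} \<and> j \<in> gamma A i \<phi>}. Fm A \<phi>) = sem e"
  proof (rule finite_union_sem)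
    have "finite {\<phi>. gamma A i \<phi> \<noteq> {}}" using wf unfolding pa_wf_def by blast
    then show "finite {\<phi>. gamma A i \<phi> \<noteq> {} \<and> j \<in> gamma A i \<phi>}" by (rule finite_subset[rotated]) blast
  next
    fix \<phi> assume "\<phi> \<in> {\<phi>. gamma A i \<phi> \<noteq> {} \<and> j \<in> gamma A i \<phi>}"
    then have g: "gamma A i \<phi> \<noteq> {}" by blast
    show "\<exists>e. Fm A \<phi> = sem e"
    proof (rule Fm_sem, intro ballI)
      fix r assume "r \<in># \<phi>"
      then show "\<exists>e. lang_pa A r = sem e" by (rule IH[OF child_smaller[OF _ g assms(1)]])
    qed
  qed
  then obtain e2 where e2: "(\<Union>\<phi>\<in>{\<phi>. gamma A i \<phi> \<noteq> {} \<and> j \<in> gamma A i \<phi>}. Fm A \<phi>) = sem e2" by blast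
  have "{U. stepA A i U j} = sem (Plus e1 e2)" unfolding step_decomp using e1 e2 by simp
  then show ?thesis by (rule exI)
qed

lemma lang_rat: "\<exists>e. lang_pa A q = sem e"
proof (induction q rule: measure_induct_rule[of "\<lambda>q. card (down A q)"])
  case (less q)
  show ?case
  proof (cases "q \<in> states A")
    case False
    have "lang_pa A q = sem Zero" unfolding lang_N[OF wf] using runN_states[OF wf] False by auto
    then show ?thesis by (rule exI)
  next
    case True
    define Q where "Q = down A q"
    define Lab where "Lab i j = (if i \<in> Q then {U. stepA A i U j} else {})" for i j
    have lab: "\<exists>e. Lab i j = sem e" for i j
    proof (cases "i \<in> Q")
      case True
      then have "\<exists>e. {U. stepA A i U j} = sem e" unfolding Q_def by (rule lab_sem[OF _ less])
      then show ?thesis using True unfolding Lab_def by simp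
    next
      case False
      then have "Lab i j = sem Zero" unfolding Lab_def by simp
      then show ?thesis by (rule exI)
    qed
    have K: "\<exists>e. {U. pw Lab Q i U j} = sem e" for i j
      unfolding Q_def by (rule kleene[OF down_fin lab[unfolded Q_def]])
    have Qst: "i \<in> Q \<Longrightarrow> i \<in> states A" for i using down_sub[of q] True unfolding Q_def by auto
    have Qcl: "i \<in> Q \<Longrightarrow> stepA A i U j \<Longrightarrow> j \<in> Q" for i U j
      unfolding Q_def using down_trans[OF _ stepA_supp] by metis
    have c1: "runN A i U j \<Longrightarrow> i \<in> Q \<Longrightarrow> (i = j \<and> U = pom_one) \<or> pw Lab Q i U j" for i U j
    proof (induction rule: runN.induct)
      case (rn_one q) then show ?case by simp
    next
      case (rn_step q U q1 V q')
      have q1: "q1 \<in> Q" using Qcl rn_step by blast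
      have U: "U \<in> Lab q q1" using rn_step unfolding Lab_def by simp
      from rn_step.IH[OF q1] show ?case
      proof
        assume "q1 = q' \<and> V = pom_one"
        then show ?case using pw.pw_atom[where Lab=Lab and S=Q, OF U] by simp
      next
        assume "pw Lab Q q1 V q'"
        then show ?case using pw_trans[OF pw.pw_atom[where Lab=Lab and S=Q, OF U] q1] by blast
      qed
    qed
    have c2: "pw Lab Q i U j \<Longrightarrow> runN A i U j" for i U j
    proof (induction rule: pw.induct)
      case (pw_atom U i j)
      then have "stepA A i U j" unfolding Lab_def by (simp split: if_splits)
      then show ?case by (rule stepA_runN[OF wf])
    next
      case (pw_trans i U k V j) then show ?case by (blast intro: runN_trans)
    qed
    have c3: "pw Lab Q i U j \<Longrightarrow> j \<in> Q" for i U j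
    proof (induction rule: pw.induct)
      case (pw_atom U i j)
      then have "i \<in> Q" "stepA A i U j" unfolding Lab_def by (simp_all split: if_splits)
      then show ?case using Qcl by blast
    qed
    have qQ: "q \<in> Q" unfolding Q_def by (rule down_self)
    have "lang_pa A q = (\<Union>f\<in>final A \<inter> Q. (if f = q then {pom_one} else {}) \<union> {U. pw Lab Q q U f})"
    proof (rule set_eqI)
      fix U
      show "U \<in> lang_pa A q \<longleftrightarrow> U \<in> (\<Union>f\<in>final A \<inter> Q. (if f = q then {pom_one} else {}) \<union> {U. pw Lab Q q U f})"
      proof
        assume "U \<in> lang_pa A q"
        then obtain f where f: "f \<in> final A" "runN A q U f" unfolding lang_N[OF wf] by blast
        from c1[OF f(2) qQ] show "U \<in> (\<Union>f\<in>final A \<inter> Q. (if f = q then {pom_one} else {}) \<union> {U. pw Lab Q q U f})"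
        proof
          assume "q = f \<and> U = pom_one" then show ?thesis using f qQ by auto
        next
          assume p: "pw Lab Q q U f" then have "f \<in> Q" by (rule c3)
          then show ?thesis using f p by auto
        qed
      next
        assume "U \<in> (\<Union>f\<in>final A \<inter> Q. (if f = q then {pom_one} else {}) \<union> {U. pw Lab Q q U f})"
        then obtain f where f: "f \<in> final A" "(f = q \<and> U = pom_one) \<or> pw Lab Q q U f"
          by (auto split: if_splits)
        then have "runN A q U f" using c2 rn_one[OF True] by auto
        then show "U \<in> lang_pa A q" unfolding lang_N[OF wf] using f by blast
      qed
    qed
    moreover have "\<exists>e. (\<Union>f\<in>final A \<inter> Q. (if f = q then {pom_one} else {}) \<union> {U. pw Lab Q q U f}) = sem e"
    proof (rule finite_union_sem)
      show "finite (final A \<inter> Q)" using down_fin unfolding Q_def by blast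
    next
      fix f
      obtain e where e: "{U. pw Lab Q q U f} = sem e" using K by blast
      have "(if f = q then {pom_one} else {}) \<union> {U. pw Lab Q q U f} = sem (Plus (if f = q then One else Zero) e)"
        using e by simp
      then show "\<exists>e. (if f = q then {pom_one} else {}) \<union> {U. pw Lab Q q U f} = sem e" by (rule exI)
    qed
    ultimately show ?thesis by simp
  qed
qed

end


instance srexp :: (countable) countable by countable_datatype

datatype 'a st = Sink | E "'a srexp" | Mid "'a srexp"

instance st :: (countable) countable by countable_datatype

fun sub :: "'a srexp \<Rightarrow> 'a srexp set" where
  "sub (Plus g h) = insert (Plus g h) (sub g \<union> sub h)"
| "sub (Seq g h) = insert (Seq g h) (sub g \<union> sub h)"
| "sub (Par g h) = insert (Par g h) (sub g \<union> sub h)"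
| "sub (Star g) = insert (Star g) (sub g)"
| "sub e = {e}"

lemma sub_self: "e \<in> sub e" by (cases e) auto
lemma finite_sub: "finite (sub e)" by (induction e) auto
lemma sub_trans: "g \<in> sub e \<Longrightarrow> sub g \<subseteq> sub e" by (induction e) auto

lemma sub_Plus: "Plus g h \<in> sub e \<Longrightarrow> g \<in> sub e \<and> h \<in> sub e"
  using sub_trans[of "Plus g h" e] sub_self[of g] sub_self[of h] by auto
lemma sub_Seq: "Seq g h \<in> sub e \<Longrightarrow> g \<in> sub e \<and> h \<in> sub e"
  using sub_trans[of "Seq g h" e] sub_self[of g] sub_self[of h] by auto
lemma sub_Par: "Par g h \<in> sub e \<Longrightarrow> g \<in> sub e \<and> h \<in> sub e"
  using sub_trans[of "Par g h" e] sub_self[of g] sub_self[of h] by auto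
lemma sub_Star: "Star g \<in> sub e \<Longrightarrow> g \<in> sub e"
  using sub_trans[of "Star g" e] sub_self[of g] by auto

definition SS :: "('a::countable) srexp \<Rightarrow> 'a st set" where
  "SS e = {Sink} \<union> E ` sub e \<union> Mid ` sub e"

fun frk :: "('a::countable) st \<Rightarrow> nat multiset set" where
  "frk (E (Plus g h)) = {{#to_nat (E g)#}, {#to_nat (E h)#}}"
| "frk (E (Seq g h)) = {{#to_nat (E g)#}}"
| "frk (Mid (Seq g h)) = {{#to_nat (E h)#}}"
| "frk (E (Par g h)) = {{#to_nat (E g), to_nat (E h)#}}"
| "frk (E (Star g)) = {{#to_nat (E g)#}}"
| "frk _ = {}"

fun tgt :: "('a::countable) st \<Rightarrow> nat set" where
  "tgt (E (Plus g h)) = {to_nat (Sink :: 'a st)}"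
| "tgt (E (Seq g h)) = {to_nat (Mid (Seq g h))}"
| "tgt (Mid (Seq g h)) = {to_nat (Sink :: 'a st)}"
| "tgt (E (Par g h)) = {to_nat (Sink :: 'a st)}"
| "tgt (E (Star g)) = {to_nat (E (Star g))}"
| "tgt _ = {}"

fun dl :: "('a::countable) st \<Rightarrow> 'a \<Rightarrow> nat set" where
  "dl (E (Sym b)) a = (if a = b then {to_nat (Sink :: 'a st)} else {})"
| "dl _ _ = {}"

fun isfin :: "'a st \<Rightarrow> bool" where
  "isfin Sink = True"
| "isfin (E One) = True"
| "isfin (E (Star g)) = True"
| "isfin _ = False"

fun mu :: "'a st \<Rightarrow> nat" where
  "mu Sink = 0"
| "mu (E g) = 2 * size g + 2"
| "mu (Mid (Seq g h)) = 2 * size h + 3"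
| "mu (Mid _) = 0"

definition aut :: "('a::countable) srexp \<Rightarrow> 'a pa" where
  "aut e0 = \<lparr>states = to_nat ` SS e0, final = to_nat ` {s \<in> SS e0. isfin s},
     delta = (\<lambda>q a. if q \<in> to_nat ` SS e0 then dl (from_nat q :: 'a st) a else {}),
     gamma = (\<lambda>q \<phi>. if q \<in> to_nat ` SS e0 \<and> \<phi> \<in> frk (from_nat q :: 'a st) then tgt (from_nat q :: 'a st) else {})\<rparr>"

lemma aut_states: "states (aut e0) = to_nat ` SS e0" by (simp add: aut_def)
lemma aut_final: "final (aut e0) = to_nat ` {s \<in> SS e0. isfin s}" by (simp add: aut_def)
lemma aut_delta: "delta (aut (e0::'a::countable srexp)) q a = (if q \<in> to_nat ` SS e0 then dl (from_nat q :: 'a::countable st) a else {})"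
  unfolding aut_def by (simp only: pa.simps)
lemma aut_gamma: "gamma (aut (e0::'a::countable srexp)) q \<phi> = (if q \<in> to_nat ` SS e0 \<and> \<phi> \<in> frk (from_nat q :: 'a::countable st) then tgt (from_nat q :: 'a st) else {})"
  unfolding aut_def by (simp only: pa.simps)

lemma finite_frk: "finite (frk s)" by (cases s rule: frk.cases) auto

lemma dl_in: "(s :: 'a::countable st) \<in> SS e0 \<Longrightarrow> dl s a \<subseteq> to_nat ` SS e0"
  by (cases "(s, a)" rule: dl.cases) (auto simp: SS_def)

lemma tgt_in: "(s :: 'a::countable st) \<in> SS e0 \<Longrightarrow> tgt s \<subseteq> to_nat ` SS e0"
  by (cases s rule: tgt.cases) (auto simp: SS_def)

lemma frk_in: "(s :: 'a::countable st) \<in> SS e0 \<Longrightarrow> \<phi> \<in> frk s \<Longrightarrow> set_mset \<phi> \<subseteq> to_nat ` SS e0"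
  by (cases s rule: frk.cases) (auto simp: SS_def dest: sub_Plus sub_Seq sub_Par sub_Star)

lemma w1: "final (aut e0) \<subseteq> states (aut e0)" by (auto simp: aut_final aut_states)

lemma w2: "\<forall>q a. delta (aut (e0::'a::countable srexp)) q a \<subseteq> states (aut e0)"
proof (intro allI)
  fix q a show "delta (aut e0) q a \<subseteq> states (aut e0)"
  proof (cases "q \<in> to_nat ` SS e0")
    case True
    then obtain s where "s \<in> SS e0" "q = to_nat s" by blast
    then show ?thesis using dl_in[of s e0 a] by (simp add: aut_delta aut_states)
  qed (simp add: aut_delta)
qed

lemma w3: "\<forall>q a. q \<notin> states (aut (e0::'a::countable srexp)) \<longrightarrow> delta (aut e0) q a = {}"
  by (simp add: aut_delta aut_states)

lemma w4: "\<forall>q \<phi>. gamma (aut (e0::'a::countable srexp)) q \<phi> \<subseteq> states (aut e0)"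
proof (intro allI)
  fix q \<phi> show "gamma (aut e0) q \<phi> \<subseteq> states (aut e0)"
  proof (cases "q \<in> to_nat ` SS e0")
    case True
    then obtain s where "s \<in> SS e0" "q = to_nat s" by blast
    then show ?thesis using tgt_in[of s e0] by (simp add: aut_gamma aut_states)
  qed (simp add: aut_gamma)
qed

lemma w5: "\<forall>q \<phi>. gamma (aut (e0::'a::countable srexp)) q \<phi> \<noteq> {} \<longrightarrow> q \<in> states (aut e0) \<and> set_mset \<phi> \<subseteq> states (aut e0)"
proof (intro allI impI)
  fix q \<phi> assume "gamma (aut e0) q \<phi> \<noteq> {}"
  then have q: "q \<in> to_nat ` SS e0" "\<phi> \<in> frk (from_nat q :: 'a st)" by (simp_all add: aut_gamma split: if_splits)
  then obtain s where "s \<in> SS e0" "q = to_nat s" by blast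
  then show "q \<in> states (aut e0) \<and> set_mset \<phi> \<subseteq> states (aut e0)"
    using frk_in[of s e0 \<phi>] q by (simp add: aut_states)
qed

lemma w6: "\<forall>q. finite {\<phi>. gamma (aut (e0::'a::countable srexp)) q \<phi> \<noteq> {}}"
proof
  fix q have "{\<phi>. gamma (aut e0) q \<phi> \<noteq> {}} \<subseteq> frk (from_nat q :: 'a st)"
    by (auto simp: aut_gamma split: if_splits)
  then show "finite {\<phi>. gamma (aut e0) q \<phi> \<noteq> {}}" using finite_frk finite_subset by blast
qed

lemma aut_wf: "pa_wf (aut (e0::('a::countable) srexp))"
  unfolding pa_wf_def by (intro conjI w1 w2 w3 w4 w5 w6)

lemma aut_fin: "finite (states (aut e0))"
  by (simp add: aut_states SS_def finite_sub)

lemma mu_tgt: "x \<in> tgt (s :: 'a::countable st) \<Longrightarrow> mu (from_nat x :: 'a::countable st) \<le> mu s"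
  by (cases s rule: tgt.cases) auto

lemma mu_dl: "x \<in> dl (s :: 'a::countable st) a \<Longrightarrow> mu (from_nat x :: 'a::countable st) \<le> mu s"
  by (cases "(s, a)" rule: dl.cases) (auto split: if_splits)

lemma mu_frk: "\<phi> \<in> frk (s :: 'a::countable st) \<Longrightarrow> x \<in># \<phi> \<Longrightarrow> mu (from_nat x :: 'a::countable st) < mu s"
  by (cases s rule: frk.cases) auto

lemma aut_facyc: "fork_acyclic (aut (e0::('a::countable) srexp))"
proof -
  let ?nu = "\<lambda>q. mu (from_nat q :: 'a st)"
  have stp: "?nu p \<le> ?nu q" if ps: "(p, q) \<in> supp_step (aut e0)" for p q
  proof -
    consider (d) a where "p \<in> delta (aut e0) q a" | (g) \<phi> where "p \<in> gamma (aut e0) q \<phi>"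
      | (c) \<phi> where "p \<in># \<phi>" "gamma (aut e0) q \<phi> \<noteq> {}"
      using ps unfolding supp_step_def by blast
    then show ?thesis
    proof cases
      case d then show ?thesis using mu_dl by (auto simp: aut_delta split: if_splits)
    next
      case g then show ?thesis using mu_tgt by (auto simp: aut_gamma split: if_splits)
    next
      case c then have "\<phi> \<in> frk (from_nat q :: 'a st)" by (simp add: aut_gamma split: if_splits)
      then show ?thesis using mu_frk c(1) less_imp_le by blast
    qed
  qed
  have rt: "?nu p \<le> ?nu q" if "(p, q) \<in> supp (aut e0)" for p q
    using that unfolding supp_def
  proof (induction rule: rtrancl_induct)
    case (step y z) then show ?case using stp[of y z] by simp
  qed simp
  show ?thesis unfolding fork_acyclic_def
  proof (intro allI impI notI)
    fix q \<phi> r assume a: "r \<in># \<phi> \<and> gamma (aut e0) q \<phi> \<noteq> {}" and s: "(q, r) \<in> supp (aut e0)"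
    then have "\<phi> \<in> frk (from_nat q :: 'a st)" by (auto simp: aut_gamma split: if_splits)
    then have "?nu r < ?nu q" using mu_frk a by blast
    moreover have "?nu q \<le> ?nu r" using rt[OF s] .
    ultimately show False by simp
  qed
qed


lemma runN_from: "runN A q U f \<Longrightarrow> (f = q \<and> U = pom_one) \<or>
   (\<exists>U1 q1 U2. stepA A q U1 q1 \<and> runN A q1 U2 f \<and> U = pom_seq U1 U2)"
  by (cases rule: runN.cases) auto

context fixes e0 :: "'a::countable srexp"
begin

lemma SS_in: "s \<in> SS e0 \<Longrightarrow> to_nat s \<in> states (aut e0)"
  by (simp add: aut_states)

lemma stepE: assumes "s \<in> SS e0"
  shows "stepA (aut e0) (to_nat s) U q1 \<longleftrightarrow> (\<exists>a. q1 \<in> dl s a \<and> U = pom_sym a) \<or>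
     (\<exists>\<phi>. \<phi> \<in> frk s \<and> q1 \<in> tgt s \<and> U \<in> Fm (aut e0) \<phi>)"
proof -
  have i: "to_nat s \<in> to_nat ` SS e0" using assms by simp
  show ?thesis unfolding stepA.simps aut_delta aut_gamma using i by auto
qed

lemma final_iff: "to_nat (s::'a st) \<in> final (aut e0) \<longleftrightarrow> s \<in> SS e0 \<and> isfin s"
  by (auto simp: aut_final)

lemma Sink_SS: "Sink \<in> SS e0" by (simp add: SS_def)
lemma E_SS: "g \<in> sub e0 \<Longrightarrow> E g \<in> SS e0" by (simp add: SS_def)
lemma Mid_SS: "g \<in> sub e0 \<Longrightarrow> Mid g \<in> SS e0" by (simp add: SS_def)

lemma no_step: assumes "s \<in> SS e0" "\<And>a. dl s a = {}" "frk s = {}"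
  shows "\<not> stepA (aut e0) (to_nat s) U q1"
  using stepE[OF assms(1)] assms(2,3) by simp

lemma run_Sink: "runN (aut e0) (to_nat (Sink :: 'a st)) U f \<Longrightarrow> U = pom_one \<and> f = to_nat (Sink :: 'a st)"
  using runN_from[of "aut e0" "to_nat (Sink :: 'a st)" U f] no_step[OF Sink_SS] by auto

lemma run_to_Sink: "stepA (aut e0) q U (to_nat (Sink :: 'a st)) \<Longrightarrow> U \<in> lang_pa (aut e0) q"
proof -
  assume "stepA (aut e0) q U (to_nat (Sink :: 'a st))"
  then have "runN (aut e0) q (pom_seq U pom_one) (to_nat (Sink :: 'a st))"
    using rn_step rn_one SS_in[OF Sink_SS] by metis
  moreover have "to_nat (Sink :: 'a st) \<in> final (aut e0)" using final_iff Sink_SS by simp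
  ultimately show ?thesis unfolding lang_N[OF aut_wf] by auto
qed


lemma lang_no_step: assumes "s \<in> SS e0" "\<And>a. dl s a = {}" "frk s = {}"
  shows "lang_pa (aut e0) (to_nat s) = (if isfin s then {pom_one} else {})"
proof (rule set_eqI)
  fix U
  show "U \<in> lang_pa (aut e0) (to_nat s) \<longleftrightarrow> U \<in> (if isfin s then {pom_one} else {})"
  proof
    assume "U \<in> lang_pa (aut e0) (to_nat s)"
    then obtain f where f: "f \<in> final (aut e0)" "runN (aut e0) (to_nat s) U f" unfolding lang_N[OF aut_wf] by blast
    from runN_from[OF f(2)] no_step[OF assms] have "f = to_nat s \<and> U = pom_one" by blast
    then show "U \<in> (if isfin s then {pom_one} else {})" using f(1) final_iff by auto
  next
    assume "U \<in> (if isfin s then {pom_one} else {})"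
    then have "isfin s" "U = pom_one" by (auto split: if_splits)
    then show "U \<in> lang_pa (aut e0) (to_nat s)" unfolding lang_N[OF aut_wf]
      using rn_one[OF SS_in[OF assms(1)]] final_iff assms(1) by auto
  qed
qed

lemma lang_toSink: assumes "s \<in> SS e0" "\<not> isfin s" "\<And>a. dl s a \<subseteq> {to_nat (Sink :: 'a st)}"
  "tgt s \<subseteq> {to_nat (Sink :: 'a st)}"
  shows "lang_pa (aut e0) (to_nat s) = {U. stepA (aut e0) (to_nat s) U (to_nat (Sink :: 'a st))}"
proof (rule set_eqI)
  fix U
  show "U \<in> lang_pa (aut e0) (to_nat s) \<longleftrightarrow> U \<in> {U. stepA (aut e0) (to_nat s) U (to_nat (Sink :: 'a st))}"
  proof
    assume "U \<in> lang_pa (aut e0) (to_nat s)"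
    then obtain f where f: "f \<in> final (aut e0)" "runN (aut e0) (to_nat s) U f" unfolding lang_N[OF aut_wf] by blast
    have "f \<noteq> to_nat s" using f(1) final_iff assms(2) by auto
    then obtain U1 q1 U2 where u: "stepA (aut e0) (to_nat s) U1 q1" "runN (aut e0) q1 U2 f" "U = pom_seq U1 U2"
      using runN_from[OF f(2)] by blast
    have "q1 = to_nat (Sink :: 'a st)" using u(1) assms(3,4) unfolding stepE[OF assms(1)] by blast
    then have "U2 = pom_one" using run_Sink u(2) by blast
    then show "U \<in> {U. stepA (aut e0) (to_nat s) U (to_nat (Sink :: 'a st))}"
      using u \<open>q1 = _\<close> by simp
  next
    assume "U \<in> {U. stepA (aut e0) (to_nat s) U (to_nat (Sink :: 'a st))}"
    then show "U \<in> lang_pa (aut e0) (to_nat s)" using run_to_Sink by blast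
  qed
qed

lemma lang_Seq: assumes "Seq g h \<in> sub e0"
  shows "lang_pa (aut e0) (to_nat (E (Seq g h))) = lseq (lang_pa (aut e0) (to_nat (E g))) (lang_pa (aut e0) (to_nat (Mid (Seq g h))))"
proof (rule set_eqI)
  have sE: "E (Seq g h) \<in> SS e0" using E_SS[OF assms] .
  have sM: "Mid (Seq g h) \<in> SS e0" using Mid_SS[OF assms] .
  fix U
  show "U \<in> lang_pa (aut e0) (to_nat (E (Seq g h))) \<longleftrightarrow> U \<in> lseq (lang_pa (aut e0) (to_nat (E g))) (lang_pa (aut e0) (to_nat (Mid (Seq g h))))"
  proof
    assume "U \<in> lang_pa (aut e0) (to_nat (E (Seq g h)))"
    then obtain f where f: "f \<in> final (aut e0)" "runN (aut e0) (to_nat (E (Seq g h))) U f" unfolding lang_N[OF aut_wf] by blast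
    have "f \<noteq> to_nat (E (Seq g h))" using f(1) final_iff by auto
    then obtain U1 q1 U2 where u: "stepA (aut e0) (to_nat (E (Seq g h))) U1 q1" "runN (aut e0) q1 U2 f" "U = pom_seq U1 U2"
      using runN_from[OF f(2)] by blast
    have "q1 = to_nat (Mid (Seq g h)) \<and> U1 \<in> Fm (aut e0) {#to_nat (E g)#}" using u(1) unfolding stepE[OF sE] by simp
    then have "q1 = to_nat (Mid (Seq g h))" "U1 \<in> lang_pa (aut e0) (to_nat (E g))" by (simp_all add: Fm_single)
    moreover have "U2 \<in> lang_pa (aut e0) q1" unfolding lang_N[OF aut_wf] using u(2) f(1) by blast
    ultimately show "U \<in> lseq (lang_pa (aut e0) (to_nat (E g))) (lang_pa (aut e0) (to_nat (Mid (Seq g h))))"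
      unfolding lseq_def using u(3) by blast
  next
    assume "U \<in> lseq (lang_pa (aut e0) (to_nat (E g))) (lang_pa (aut e0) (to_nat (Mid (Seq g h))))"
    then obtain U1 U2 where u: "U = pom_seq U1 U2" "U1 \<in> lang_pa (aut e0) (to_nat (E g))" "U2 \<in> lang_pa (aut e0) (to_nat (Mid (Seq g h)))"
      unfolding lseq_def by blast
    obtain f where f: "f \<in> final (aut e0)" "runN (aut e0) (to_nat (Mid (Seq g h))) U2 f" using u(3) unfolding lang_N[OF aut_wf] by blast
    have "stepA (aut e0) (to_nat (E (Seq g h))) U1 (to_nat (Mid (Seq g h)))"
      unfolding stepE[OF sE] using u(2) by (simp add: Fm_single)
    then have "runN (aut e0) (to_nat (E (Seq g h))) (pom_seq U1 U2) f" by (rule rn_step[OF _ f(2)])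
    then have "runN (aut e0) (to_nat (E (Seq g h))) U f" using u(1) by simp
    then show "U \<in> lang_pa (aut e0) (to_nat (E (Seq g h)))" unfolding lang_N[OF aut_wf] using f(1) by blast
  qed
qed

lemma lang_Star: assumes "Star g \<in> sub e0"
  shows "lang_pa (aut e0) (to_nat (E (Star g))) = sstar (lang_pa (aut e0) (to_nat (E g)))"
proof -
  have sE: "E (Star g) \<in> SS e0" using E_SS[OF assms] .
  let ?q = "to_nat (E (Star g))"
  let ?L = "lang_pa (aut e0) (to_nat (E g))"
  have st: "stepA (aut e0) ?q U q1 \<longleftrightarrow> q1 = ?q \<and> U \<in> ?L" for U q1
    unfolding stepE[OF sE] by (simp add: Fm_single)
  have 1: "runN (aut e0) q U f \<Longrightarrow> q = ?q \<Longrightarrow> f = ?q \<and> U \<in> sstar ?L" for q U f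
  proof (induction rule: runN.induct)
    case (rn_one q) then show ?case by (simp add: ss_one)
  next
    case (rn_step q U q1 V q')
    then have "q1 = ?q" "U \<in> ?L" using st[of U q1] rn_step.hyps(1) by simp_all
    then have "q' = ?q" "V \<in> sstar ?L" using rn_step.IH by simp_all
    then show ?case using ss_step[OF \<open>U \<in> ?L\<close>] by simp
  qed
  have 2: "U \<in> sstar ?L \<Longrightarrow> runN (aut e0) ?q U ?q" for U
  proof (induction rule: sstar.induct)
    case ss_one then show ?case using rn_one[OF SS_in[OF sE]] .
  next
    case (ss_step x y)
    then have "stepA (aut e0) ?q x ?q" using st by blast
    then show ?case by (rule rn_step[OF _ ss_step.IH])
  qed
  have fin: "?q \<in> final (aut e0)" using final_iff sE by simp
  show ?thesis
  proof (rule set_eqI)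
    fix U show "U \<in> lang_pa (aut e0) ?q \<longleftrightarrow> U \<in> sstar ?L"
    proof
      assume "U \<in> lang_pa (aut e0) ?q"
      then obtain f where "runN (aut e0) ?q U f" unfolding lang_N[OF aut_wf] by blast
      then show "U \<in> sstar ?L" using 1 by blast
    next
      assume "U \<in> sstar ?L"
      then have "runN (aut e0) ?q U ?q" by (rule 2)
      then show "U \<in> lang_pa (aut e0) ?q" unfolding lang_N[OF aut_wf] using fin by blast
    qed
  qed
qed

lemma lang_E: "g \<in> sub e0 \<Longrightarrow> lang_pa (aut e0) (to_nat (E g)) = sem g"
proof (induction g)
  case Zero
  show ?case using lang_no_step[OF E_SS[OF Zero]] by simp
next
  case One
  show ?case using lang_no_step[OF E_SS[OF One]] by simp
next
  case (Sym b)
  have "lang_pa (aut e0) (to_nat (E (Sym b))) = {U. stepA (aut e0) (to_nat (E (Sym b))) U (to_nat (Sink :: 'a st))}"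
    by (rule lang_toSink[OF E_SS[OF Sym]]) auto
  also have "\<dots> = {pom_sym b}" unfolding stepE[OF E_SS[OF Sym]] by auto
  finally show ?case by simp
next
  case (Plus g h)
  then have IH: "lang_pa (aut e0) (to_nat (E g)) = sem g" "lang_pa (aut e0) (to_nat (E h)) = sem h"
    using sub_Plus by blast+
  have "lang_pa (aut e0) (to_nat (E (Plus g h))) = {U. stepA (aut e0) (to_nat (E (Plus g h))) U (to_nat (Sink :: 'a st))}"
    by (rule lang_toSink[OF E_SS[OF Plus.prems]]) auto
  also have "\<dots> = sem g \<union> sem h" unfolding stepE[OF E_SS[OF Plus.prems]] using IH by (auto simp: Fm_single)
  finally show ?case by simp
next
  case (Par g h)
  then have IH: "lang_pa (aut e0) (to_nat (E g)) = sem g" "lang_pa (aut e0) (to_nat (E h)) = sem h"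
    using sub_Par by blast+
  have "lang_pa (aut e0) (to_nat (E (Par g h))) = {U. stepA (aut e0) (to_nat (E (Par g h))) U (to_nat (Sink :: 'a st))}"
    by (rule lang_toSink[OF E_SS[OF Par.prems]]) auto
  also have "\<dots> = lpar (sem g) (sem h)" unfolding stepE[OF E_SS[OF Par.prems]] using IH by (auto simp: Fm_pair)
  finally show ?case by simp
next
  case (Seq g h)
  then have IH: "lang_pa (aut e0) (to_nat (E g)) = sem g" "lang_pa (aut e0) (to_nat (E h)) = sem h"
    using sub_Seq by blast+
  have "lang_pa (aut e0) (to_nat (Mid (Seq g h))) = {U. stepA (aut e0) (to_nat (Mid (Seq g h))) U (to_nat (Sink :: 'a st))}"
    by (rule lang_toSink[OF Mid_SS[OF Seq.prems]]) auto
  also have "\<dots> = sem h" unfolding stepE[OF Mid_SS[OF Seq.prems]] using IH by (auto simp: Fm_single)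
  finally show ?case using lang_Seq[OF Seq.prems] IH by simp
next
  case (Star g)
  then have IH: "lang_pa (aut e0) (to_nat (E g)) = sem g" using sub_Star by blast
  show ?case using lang_Star[OF Star.prems] IH by (simp add: lstar_sstar)
qed

end


theorem theorem8p5:
  fixes L :: "('a::finite) pomset set"
  shows "(\<exists>e. L = sem e) \<longleftrightarrow>
    (\<exists>(A :: 'a pa) q. pa_wf A \<and> finite (states A) \<and> fork_acyclic A \<and>
        q \<in> states A \<and> L = lang_pa A q)"
proof
  assume "\<exists>e. L = sem e"
  then obtain e where L: "L = sem e" by blast
  have q: "to_nat (E e) \<in> states (aut e)" using SS_in[OF E_SS[OF sub_self]] .
  have le: "lang_pa (aut e) (to_nat (E e)) = sem e" using lang_E[OF sub_self] .
  have "pa_wf (aut e) \<and> finite (states (aut e)) \<and> fork_acyclic (aut e) \<and> to_nat (E e) \<in> states (aut e) \<and> L = lang_pa (aut e) (to_nat (E e))"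
    using aut_wf[of e] aut_fin[of e] aut_facyc[of e] q L le by simp
  then show "\<exists>(A :: 'a pa) q. pa_wf A \<and> finite (states A) \<and> fork_acyclic A \<and> q \<in> states A \<and> L = lang_pa A q"
    by blast
next
  assume "\<exists>(A :: 'a pa) q. pa_wf A \<and> finite (states A) \<and> fork_acyclic A \<and> q \<in> states A \<and> L = lang_pa A q"
  then obtain A :: "'a pa" and q where A: "pa_wf A" "finite (states A)" "fork_acyclic A" "L = lang_pa A q" by blast
  obtain e where "lang_pa A q = sem e" using lang_rat[OF A(1,2,3)] by blast
  then show "\<exists>e. L = sem e" using A(4) by blast
qed

end
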